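(* Let $\Phi$ be a collection of repulsive potentials on $\mathbb{X}$, let $U\subset\mathbb{C}$ be bounded, and let $\Lambda\subset\mathbb{X}$ be bounded and measurable. Then the family of functions $\{U\to\mathbb{C},\ \lambda\mapsto Z_{\Lambda,\phi}(\lambda)\ :\ \phi\in\Phi\}$ is uniformly equicontinuous. Moreover, if $\Phi$ is closed under modification and is $\delta$-zero-free on $\Lambda$ at some activity $\lambda_0\in\mathbb{C}$ for some $\delta>0$, then there is a complex neighborhood $W$ of $\lambda_0$ such that the family $\{W\to\mathbb{C},\ \lambda\mapsto\kappa_{\Lambda,\phi,\lambda}(x)\ :\ \phi\in\Phi,\ x\in\Lambda\}$ is well defined and uniformly equicontinuous.
   Context: $(\mathbb{X},d)$ is a complete separable metric space with a locally finite Borel measure $\nu$. A potential $\phi=(\phi_k)_{k\in\mathbb{N}}$ is a family of measurable $\phi_k:\mathbb{X}^k\to\mathbb{R}\cup\{\infty\}$, written $\phi(\mathbf{x})=\phi_k(\mathbf{x})$ for $\mathbf{x}\in\mathbb{X}^k$; repulsive means $\phi_k\ge0$ for all $k$; potentials are assumed symmetric (invariant under permutations of coordinates). For $\mathbf{x}\in\mathbb{X}^k$, $S\subseteq[k]$, $\mathbf{x}_S=(x_i)_{i\in S}$; $H(\mathbf{x})=\sum_{\emptyset\ne S\subseteq[k]}\phi(\mathbf{x}_S)$; $Z_{\Lambda,\phi}(\lambda)=\sum_{k\ge0}\frac{\lambda^k}{k!}\int_{\Lambda^k}e^{-H(\mathbf{x})}\nu^k(d\mathbf{x})$. Pinning: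 for $\mathbf{x}\in\mathbb{X}^k$, $\phi(\cdot\mid\mathbf{x})$ is the potential $\phi(\mathbf{y}\mid\mathbf{x})=\sum_{S\subseteq[k]}\phi(\mathbf{y},\mathbf{x}_S)$ for $\mathbf{y}\in\mathbb{X}^m$ (concatenated tuples; $S=\emptyset$ gives $\phi(\mathbf{y})$); $Z_{\Lambda,\phi}(\lambda\mid\mathbf{x})$ is the partition function of $\phi(\cdot\mid\mathbf{x})$. Modified $k$-point density: if $Z_{\Lambda,\phi}(\lambda)\ne0$, $\kappa_{\Lambda,\phi,\lambda}(\mathbf{x})=\lambda^k Z_{\Lambda,\phi}(\lambda\mid\mathbf{x})/Z_{\Lambda,\phi}(\lambda)$. Fix $z\in\mathbb{X}$ and set $D(\mathbf{x})=\sum_j d(z,x_j)$. For $y\in\mathbb{X}$, $t\in[0,\infty]$: $\phi(\mathbf{x}\mid y_{\prec t})=\phi(\mathbf{x}\mid y)$ if $D(\mathbf{x})<t$ and $=\phi(\mathbf{x})$ otherwise. $\Phi$ is $\delta$-zero-free on $\Lambda$ at $\lambda$ if $|Z_{\Lambda,\phi}(\lambda)|\ge\delta$ for all $\phi\in\Phi$. $\Phi$ is closed under modification if (1) for all $\phi\in\Phi$, $y\in\mathbb{X}$, $t\in[0,\infty]$, $\phi(\cdot\mid y_{\prec t})\in\Phi$, and (2) for all $\phi\in\Phi$ and measurable $\Delta\subseteq\mathbb{X}$, the potential $\psi$ with $\psi_k=\phi_k$ for $k\ge2$ and $\psi_1=\infty$ on $\Delta$, $\psi_1=\phi_1$ off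 $\Delta$, lies in $\Phi$. *)

theory Defs
  imports "HOL-Analysis.Analysis"
begin

text \<open>Tuples in X^k are represented as lists of length k; a potential
  phi = (phi_k)_k is a single function on lists, phi_k being its restriction
  to lists of length k (k >= 1). Its value at the empty list plays no role.\<close>

type_synonym 'a potential = "'a list \<Rightarrow> ereal"

definition locally_finite_borel :: "('a::metric_space) measure \<Rightarrow> bool" where
  "locally_finite_borel \<nu> \<longleftrightarrow> sets \<nu> = sets borel \<and>
     (\<forall>B \<in> sets borel. bounded B \<longrightarrow> emeasure \<nu> B < \<infinity>)"

definition is_potential :: "('a::metric_space) potential \<Rightarrow> bool" where
  "is_potential \<phi> \<longleftrightarrow>
     (\<forall>k\<ge>1. (\<lambda>x. \<phi> (map x [0..<k])) \<in> borel_measurable (PiM {..<k} (\<lambda>_. borel))) \<and>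
     (\<forall>xs. xs \<noteq> [] \<longrightarrow> \<phi> xs \<noteq> -\<infinity>) \<and>
     (\<forall>xs ys. xs \<noteq> [] \<longrightarrow> mset xs = mset ys \<longrightarrow> \<phi> xs = \<phi> ys)"

definition repulsive :: "'a potential \<Rightarrow> bool" where
  "repulsive \<phi> \<longleftrightarrow> (\<forall>xs. xs \<noteq> [] \<longrightarrow> \<phi> xs \<ge> 0)"

definition hamiltonian :: "'a potential \<Rightarrow> 'a list \<Rightarrow> ereal" where
  "hamiltonian \<phi> xs = (\<Sum>S \<in> Pow {..<length xs} - {{}}. \<phi> (nths xs S))"

definition exp_neg :: "ereal \<Rightarrow> real" where
  "exp_neg h = (case h of ereal r \<Rightarrow> exp (- r) | PInfty \<Rightarrow> 0 | MInfty \<Rightarrow> 0)"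

definition partition_fn ::
  "('a::metric_space) measure \<Rightarrow> 'a set \<Rightarrow> 'a potential \<Rightarrow> complex \<Rightarrow> complex" where
  "partition_fn \<nu> \<Lambda> \<phi> w =
     (\<Sum>k. w ^ k / of_nat (fact k) *
        complex_of_real (LINT x : (PiE {..<k} (\<lambda>_. \<Lambda>)) | PiM {..<k} (\<lambda>_. \<nu>).
                          exp_neg (hamiltonian \<phi> (map x [0..<k]))))"

definition pin :: "'a potential \<Rightarrow> 'a list \<Rightarrow> 'a potential" where
  "pin \<phi> xs ys = (if ys = [] then \<phi> [] else
     (\<Sum>S \<in> Pow {..<length xs}. \<phi> (ys @ nths xs S)))"

text \<open>Modified k-point density (meaningful when Z \<noteq> 0).\<close>
definition kappa ::
  "('a::metric_space) measure \<Rightarrow> 'a set \<Rightarrow> 'a potential \<Rightarrow> complex \<Rightarrow> 'a list \<Rightarrow> complex" where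
  "kappa \<nu> \<Lambda> \<phi> w xs = w ^ length xs * partition_fn \<nu> \<Lambda> (pin \<phi> xs) w / partition_fn \<nu> \<Lambda> \<phi> w"

definition Dsum :: "('a::metric_space) \<Rightarrow> 'a list \<Rightarrow> real" where
  "Dsum z xs = (\<Sum>x \<leftarrow> xs. dist z x)"

definition seq_pin :: "('a::metric_space) \<Rightarrow> 'a potential \<Rightarrow> 'a \<Rightarrow> ereal \<Rightarrow> 'a potential" where
  "seq_pin z \<phi> y t xs = (if ereal (Dsum z xs) < t then pin \<phi> [y] xs else \<phi> xs)"

definition hard_core_mod :: "'a potential \<Rightarrow> 'a set \<Rightarrow> 'a potential" where
  "hard_core_mod \<phi> \<Delta> xs = (if length xs = 1 \<and> hd xs \<in> \<Delta> then \<infinity> else \<phi> xs)"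

definition closed_under_modification :: "('a::metric_space) \<Rightarrow> 'a potential set \<Rightarrow> bool" where
  "closed_under_modification z \<Phi> \<longleftrightarrow>
     (\<forall>\<phi>\<in>\<Phi>. \<forall>y. \<forall>t. t \<ge> 0 \<longrightarrow> seq_pin z \<phi> y t \<in> \<Phi>) \<and>
     (\<forall>\<phi>\<in>\<Phi>. \<forall>\<Delta> \<in> sets borel. hard_core_mod \<phi> \<Delta> \<in> \<Phi>)"

definition zero_free ::
  "('a::metric_space) measure \<Rightarrow> 'a potential set \<Rightarrow> 'a set \<Rightarrow> complex \<Rightarrow> real \<Rightarrow> bool" where
  "zero_free \<nu> \<Phi> \<Lambda> w \<delta> \<longleftrightarrow> (\<forall>\<phi>\<in>\<Phi>. norm (partition_fn \<nu> \<Lambda> \<phi> w) \<ge> \<delta>)"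

definition unif_equicontinuous_on ::
  "('b::metric_space) set \<Rightarrow> ('b \<Rightarrow> 'c::metric_space) set \<Rightarrow> bool" where
  "unif_equicontinuous_on U F \<longleftrightarrow>
     (\<forall>e>0. \<exists>d>0. \<forall>f\<in>F. \<forall>a\<in>U. \<forall>b\<in>U. dist a b < d \<longrightarrow> dist (f a) (f b) < e)"

end

theory Submission
  imports Defs
begin



lemma integral_indicator_bound:
  fixes g :: "'b \<Rightarrow> real"
  assumes A: "A \<in> sets M" "emeasure M A < \<infinity>" and g: "\<And>x. \<bar>g x\<bar> \<le> 1"
  shows "\<bar>set_lebesgue_integral M A g\<bar> \<le> measure M A"
proof (cases "integrable M (\<lambda>x. indicator A x *\<^sub>R g x)")
  case True
  have "\<bar>set_lebesgue_integral M A g\<bar> \<le> (LINT x|M. norm (indicator A x *\<^sub>R g x))"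
    unfolding set_lebesgue_integral_def using integral_norm_bound by (metis real_norm_def)
  also have "\<dots> \<le> (LINT x|M. indicator A x)"
  proof (rule integral_mono)
    show "integrable M (\<lambda>x. norm (indicator A x *\<^sub>R g x))" using True by auto
    show "integrable M (\<lambda>x. indicator A x :: real)" using A by auto
    fix x show "norm (indicator A x *\<^sub>R g x) \<le> (indicator A x :: real)"
      using g[of x] by (auto simp: indicator_def)
  qed
  also have "\<dots> = measure M A" using A by simp
  finally show ?thesis .
next
  case False
  then show ?thesis unfolding set_lebesgue_integral_def
    by (simp add: not_integrable_integral_eq)
qed


lemma power_diff_bound:
  fixes a b :: complex
  assumes "norm a \<le> R" "norm b \<le> R"
  shows "norm (a^k - b^k) \<le> norm (a - b) * (2*(R+1))^k"
proof (induction k)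
  case 0 then show ?case by simp
next
  case (Suc k)
  have R0: "R \<ge> 0" using assms norm_ge_zero order_trans by blast
  have "a^Suc k - b^Suc k = a * (a^k - b^k) + (a - b) * b^k" by (simp add: algebra_simps)
  hence "norm (a^Suc k - b^Suc k) \<le> norm a * norm (a^k - b^k) + norm (a - b) * norm b ^ k"
    by (metis norm_mult norm_power norm_triangle_ineq)
  also have "\<dots> \<le> R * (norm (a - b) * (2*(R+1))^k) + norm (a - b) * R ^ k"
    by (intro add_mono mult_mono Suc.IH power_mono assms) (auto simp: R0)
  also have "R ^ k \<le> (2*(R+1))^k" using R0 by (intro power_mono) auto
  hence "R * (norm (a - b) * (2*(R+1))^k) + norm (a - b) * R ^ k
      \<le> R * (norm (a - b) * (2*(R+1))^k) + norm (a - b) * (2*(R+1))^k"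
    by (simp add: mult_left_mono)
  also have "\<dots> = norm (a - b) * (2*(R+1))^k * (R + 1)" by (simp add: algebra_simps)
  also have "\<dots> \<le> norm (a - b) * (2*(R+1))^k * (2*(R+1))"
    using R0 by (intro mult_left_mono) auto
  finally show ?case by (simp add: algebra_simps)
qed


lemma series_bound:
  fixes c :: "nat \<Rightarrow> real" and a :: complex
  assumes c: "\<And>k. \<bar>c k\<bar> \<le> m^k" and m: "m \<ge> 0" and a: "norm a \<le> R"
  shows "summable (\<lambda>k. a^k / of_nat (fact k) * complex_of_real (c k))"
    and "norm (\<Sum>k. a^k / of_nat (fact k) * complex_of_real (c k)) \<le> exp (m*R)"
proof -
  have R0: "R \<ge> 0" using a norm_ge_zero order_trans by blast
  have bnd: "norm (a^k / of_nat (fact k) * complex_of_real (c k)) \<le> (m*R)^k / fact k" for k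
  proof -
    have e: "norm (a^k / of_nat (fact k) * complex_of_real (c k)) = norm a ^ k * \<bar>c k\<bar> / fact k"
      by (simp add: norm_mult norm_divide norm_power)
    have "norm a ^ k * \<bar>c k\<bar> \<le> R^k * m^k"
      by (intro mult_mono power_mono c a) (auto simp: R0)
    hence "norm a ^ k * \<bar>c k\<bar> / fact k \<le> R^k * m^k / fact k"
      by (intro divide_right_mono) auto
    thus ?thesis unfolding e by (simp add: power_mult_distrib mult.commute)
  qed
  have s: "(\<lambda>k. (m*R)^k / fact k) sums exp (m*R)"
    using exp_converges[of "m*R"] by (simp add: divide_inverse_commute)
  have s1: "summable (\<lambda>k. (m*R)^k / fact k)" using s by (simp add: sums_iff)
  show "summable (\<lambda>k. a^k / of_nat (fact k) * complex_of_real (c k))"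
    by (rule summable_comparison_test[OF _ s1]) (use bnd in auto)
  show "norm (\<Sum>k. a^k / of_nat (fact k) * complex_of_real (c k)) \<le> exp (m*R)"
    using norm_suminf_le[OF bnd s1] s sums_unique by metis
qed

lemma series_lip:
  fixes c :: "nat \<Rightarrow> real" and a b :: complex
  assumes c: "\<And>k. \<bar>c k\<bar> \<le> m^k" and m: "m \<ge> 0" and a: "norm a \<le> R" and b: "norm b \<le> R"
  shows "norm ((\<Sum>k. a^k / of_nat (fact k) * complex_of_real (c k)) -
               (\<Sum>k. b^k / of_nat (fact k) * complex_of_real (c k))) \<le> norm (a - b) * exp (2*(R+1)*m)"
proof -
  have R0: "R \<ge> 0" using a norm_ge_zero order_trans by blast
  note sa = series_bound(1)[OF c m a] and sb = series_bound(1)[OF c m b]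
  have eq0: "a^k / of_nat (fact k) * complex_of_real (c k) - b^k / of_nat (fact k) * complex_of_real (c k)
     = (a^k - b^k) / of_nat (fact k) * complex_of_real (c k)" for k
    by (simp add: diff_divide_distrib left_diff_distrib)
  have eq: "(\<Sum>k. a^k / of_nat (fact k) * complex_of_real (c k)) -
               (\<Sum>k. b^k / of_nat (fact k) * complex_of_real (c k))
       = (\<Sum>k. (a^k - b^k) / of_nat (fact k) * complex_of_real (c k))"
    using suminf_diff[OF sa sb] eq0 by presburger
  have bnd: "norm ((a^k - b^k) / of_nat (fact k) * complex_of_real (c k))
      \<le> norm (a - b) * ((2*(R+1)*m)^k / fact k)" for k
  proof -
    have e: "norm ((a^k - b^k) / of_nat (fact k) * complex_of_real (c k)) = norm (a^k - b^k) * \<bar>c k\<bar> / fact k"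
      by (simp add: norm_mult norm_divide)
    have "norm (a^k - b^k) * \<bar>c k\<bar> \<le> (norm (a - b) * (2*(R+1))^k) * m^k"
      by (intro mult_mono power_diff_bound c a b) (auto simp: R0)
    hence "norm (a^k - b^k) * \<bar>c k\<bar> / fact k \<le> (norm (a - b) * (2*(R+1))^k) * m^k / fact k"
      by (intro divide_right_mono) auto
    also have "(norm (a - b) * (2*(R+1))^k) * m^k / fact k = norm (a - b) * ((2*(R+1)*m)^k / fact k)"
      by (simp add: power_mult_distrib)
    finally show ?thesis unfolding e .
  qed
  have s: "(\<lambda>k. (2*(R+1)*m)^k / fact k) sums exp (2*(R+1)*m)"
    using exp_converges[of "2*(R+1)*m"] by (simp add: divide_inverse_commute)
  hence s2: "(\<lambda>k. norm (a - b) * ((2*(R+1)*m)^k / fact k)) sums (norm (a - b) * exp (2*(R+1)*m))"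
    by (rule sums_mult)
  have s3: "summable (\<lambda>k. norm (a - b) * ((2*(R+1)*m)^k / fact k))" using s2 by (simp add: sums_iff)
  have "(\<Sum>k. norm (a - b) * ((2*(R+1)*m)^k / fact k)) = norm (a - b) * exp (2*(R+1)*m)"
    using s2 by (rule sums_unique[symmetric])
  thus ?thesis unfolding eq using norm_suminf_le[OF bnd s3] by simp
qed

lemma exp_neg_bound: "h \<ge> 0 \<Longrightarrow> \<bar>exp_neg h\<bar> \<le> 1"
  by (cases h) (auto simp: exp_neg_def)

lemma hamiltonian_nonneg:
  assumes "repulsive \<phi>" shows "hamiltonian \<phi> xs \<ge> 0"
  unfolding hamiltonian_def
proof (rule sum_nonneg)
  fix S assume S: "S \<in> Pow {..<length xs} - {{}}"
  then obtain i where "i \<in> S" "i < length xs" by auto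
  hence "nths xs S \<noteq> []" using set_nths[of xs S] by fastforce
  thus "\<phi> (nths xs S) \<ge> 0" using assms by (simp add: repulsive_def)
qed

lemma pin_repulsive:
  assumes "repulsive \<phi>" shows "repulsive (pin \<phi> xs)"
  unfolding repulsive_def pin_def
proof (intro allI impI)
  fix ys :: "'a list" assume "ys \<noteq> []"
  thus "0 \<le> (if ys = [] then \<phi> [] else \<Sum>S\<in>Pow {..<length xs}. \<phi> (ys @ nths xs S))"
    using assms by (auto simp: repulsive_def intro!: sum_nonneg)
qed

lemma lfb_sigma_finite:
  assumes "locally_finite_borel (\<nu> :: ('a::metric_space) measure)"
  shows "sigma_finite_measure \<nu>"
proof (rule sigma_finite_measure.intro)
  have sets: "sets \<nu> = sets borel" using assms by (simp add: locally_finite_borel_def)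
  have fin: "\<And>B. B \<in> sets borel \<Longrightarrow> bounded B \<Longrightarrow> emeasure \<nu> B < \<infinity>"
    using assms by (simp add: locally_finite_borel_def)
  have sp: "space \<nu> = UNIV" using sets_eq_imp_space_eq[OF sets] by simp
  define A where "A = range (\<lambda>n::nat. cball (undefined::'a) (real n))"
  have 1: "countable A" unfolding A_def by simp
  have 2: "A \<subseteq> sets \<nu>" unfolding A_def sets by auto
  have 3: "\<Union> A = space \<nu>"
    unfolding sp A_def
  proof (safe)
    fix x :: 'a
    obtain n :: nat where "dist undefined x \<le> real n" using real_arch_simple by blast
    thus "x \<in> \<Union> (range (\<lambda>n::nat. cball (undefined::'a) (real n)))" by auto
  qed auto
  have 4: "\<forall>a\<in>A. emeasure \<nu> a \<noteq> \<infinity>"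
  proof
    fix a assume "a \<in> A"
    then obtain n :: nat where a: "a = cball undefined (real n)" unfolding A_def by auto
    have "emeasure \<nu> a < \<infinity>" unfolding a by (rule fin) auto
    thus "emeasure \<nu> a \<noteq> \<infinity>" by simp
  qed
  show "\<exists>A. countable A \<and> A \<subseteq> sets \<nu> \<and> \<Union> A = space \<nu> \<and> (\<forall>a\<in>A. emeasure \<nu> a \<noteq> \<infinity>)"
    using 1 2 3 4 by blast
qed

lemma enn2real_pow: "enn2real (x ^ n) = enn2real x ^ n"
  by (induction n) (simp_all add: enn2real_mult)

lemma coef_bound:
  assumes \<nu>: "locally_finite_borel (\<nu> :: ('a::metric_space) measure)"
    and \<Lambda>: "bounded \<Lambda>" "\<Lambda> \<in> sets borel" and \<phi>: "repulsive \<phi>"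
  shows "\<bar>LINT x : (PiE {..<k} (\<lambda>_. \<Lambda>)) | PiM {..<k} (\<lambda>_. \<nu>).
                          exp_neg (hamiltonian \<phi> (map x [0..<k]))\<bar> \<le> (measure \<nu> \<Lambda>)^k"
proof -
  have sets: "sets \<nu> = sets borel" using \<nu> by (simp add: locally_finite_borel_def)
  have fin: "emeasure \<nu> \<Lambda> < \<infinity>" using \<nu> \<Lambda> by (simp add: locally_finite_borel_def)
  interpret sigma_finite_measure \<nu> by (rule lfb_sigma_finite[OF \<nu>])
  interpret product_sigma_finite "\<lambda>_::nat. \<nu>" by unfold_locales
  have inS: "\<Lambda> \<in> sets \<nu>" using sets \<Lambda> by simp
  have em: "emeasure (PiM {..<k} (\<lambda>_. \<nu>)) (PiE {..<k} (\<lambda>_. \<Lambda>)) = emeasure \<nu> \<Lambda> ^ k"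
    using emeasure_PiM[of "{..<k}" "\<lambda>_. \<Lambda>"] inS by simp
  have A: "PiE {..<k} (\<lambda>_. \<Lambda>) \<in> sets (PiM {..<k} (\<lambda>_. \<nu>))"
    using inS by (intro sets_PiM_I_finite) auto
  have B: "emeasure (PiM {..<k} (\<lambda>_. \<nu>)) (PiE {..<k} (\<lambda>_. \<Lambda>)) < \<infinity>"
    unfolding em using fin by (simp add: power_less_top_ennreal)
  have "\<bar>LINT x : (PiE {..<k} (\<lambda>_. \<Lambda>)) | PiM {..<k} (\<lambda>_. \<nu>).
                          exp_neg (hamiltonian \<phi> (map x [0..<k]))\<bar>
     \<le> measure (PiM {..<k} (\<lambda>_. \<nu>)) (PiE {..<k} (\<lambda>_. \<Lambda>))"
    by (rule integral_indicator_bound[OF A B]) (intro exp_neg_bound hamiltonian_nonneg \<phi>)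
  also have "\<dots> = (measure \<nu> \<Lambda>)^k"
    unfolding measure_def em by (simp add: enn2real_pow)
  finally show ?thesis .
qed

lemma Z_bound:
  assumes \<nu>: "locally_finite_borel (\<nu> :: ('a::metric_space) measure)"
    and \<Lambda>: "bounded \<Lambda>" "\<Lambda> \<in> sets borel" and \<phi>: "repulsive \<phi>" and a: "norm a \<le> R"
  shows "norm (partition_fn \<nu> \<Lambda> \<phi> a) \<le> exp (measure \<nu> \<Lambda> * R)"
  unfolding partition_fn_def
  by (rule series_bound(2)[OF coef_bound[OF \<nu> \<Lambda> \<phi>] measure_nonneg a])

lemma Z_lip:
  assumes \<nu>: "locally_finite_borel (\<nu> :: ('a::metric_space) measure)"
    and \<Lambda>: "bounded \<Lambda>" "\<Lambda> \<in> sets borel" and \<phi>: "repulsive \<phi>" and a: "norm a \<le> R" and b: "norm b \<le> R"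
  shows "norm (partition_fn \<nu> \<Lambda> \<phi> a - partition_fn \<nu> \<Lambda> \<phi> b)
     \<le> norm (a - b) * exp (2*(R+1)*measure \<nu> \<Lambda>)"
  unfolding partition_fn_def
  by (rule series_lip[OF coef_bound[OF \<nu> \<Lambda> \<phi>] measure_nonneg a b])

lemma lip_equi:
  assumes K: "K \<ge> 0" and F: "\<And>f a b. f \<in> F \<Longrightarrow> a \<in> W \<Longrightarrow> b \<in> W \<Longrightarrow> dist (f a) (f b) \<le> K * dist a b"
  shows "unif_equicontinuous_on W F"
  unfolding unif_equicontinuous_on_def
proof (intro allI impI)
  fix e :: real assume e: "e > 0"
  show "\<exists>d>0. \<forall>f\<in>F. \<forall>a\<in>W. \<forall>b\<in>W. dist a b < d \<longrightarrow> dist (f a) (f b) < e"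
  proof (intro exI[of _ "e / (K+1)"] conjI ballI impI)
    show "e / (K+1) > 0" using e K by simp
    fix f a b assume f: "f \<in> F" and a: "a \<in> W" and b: "b \<in> W" and d: "dist a b < e / (K+1)"
    have "dist (f a) (f b) \<le> K * dist a b" by (rule F[OF f a b])
    also have "\<dots> \<le> K * (e / (K+1))" using d K by (intro mult_left_mono) auto
    also have "\<dots> < e" using e K by (simp add: field_simps)
    finally show "dist (f a) (f b) < e" .
  qed
qed

lemma quot_lip:
  fixes a b Na Nb Da Db :: complex
  assumes a: "norm a \<le> R" and b: "norm b \<le> R" and Na: "norm Na \<le> M" and Nb: "norm Nb \<le> M"
    and Da: "norm Da \<le> M" "norm Da \<ge> \<eta>" and Db: "norm Db \<le> M" "norm Db \<ge> \<eta>" and \<eta>: "\<eta> > 0"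
    and N: "norm (Na - Nb) \<le> L * norm (a - b)" and D: "norm (Da - Db) \<le> L * norm (a - b)"
    and L: "L \<ge> 0" and M: "M \<ge> 0"
  shows "norm (a * Na / Da - b * Nb / Db) \<le> ((M + R*L)*M + R*M*L) / \<eta>^2 * norm (a - b)"
proof -
  have R: "R \<ge> 0" using a norm_ge_zero order_trans by blast
  have Da0: "Da \<noteq> 0" and Db0: "Db \<noteq> 0" using Da Db \<eta> by auto
  have eq: "a * Na / Da - b * Nb / Db = ((a * Na - b * Nb) * Db + b * Nb * (Db - Da)) / (Da * Db)"
    using Da0 Db0 by (simp add: field_simps)
  have n1: "norm (a * Na - b * Nb) \<le> (M + R*L) * norm (a - b)"
  proof -
    have "a * Na - b * Nb = (a - b) * Na + b * (Na - Nb)" by (simp add: algebra_simps)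
    hence "norm (a * Na - b * Nb) \<le> norm (a - b) * norm Na + norm b * norm (Na - Nb)"
      using norm_triangle_ineq[of "(a - b) * Na" "b * (Na - Nb)"] by (simp add: norm_mult)
    also have "\<dots> \<le> norm (a - b) * M + R * (L * norm (a - b))"
      by (intro add_mono mult_mono Na b N mult_left_mono) (auto simp: R)
    finally show ?thesis by (simp add: algebra_simps)
  qed
  have n2: "norm ((a * Na - b * Nb) * Db + b * Nb * (Db - Da)) \<le> ((M + R*L)*M + R*M*L) * norm (a - b)"
  proof -
    have "norm ((a * Na - b * Nb) * Db + b * Nb * (Db - Da))
        \<le> norm (a * Na - b * Nb) * norm Db + norm b * norm Nb * norm (Db - Da)"
      using norm_triangle_ineq[of "(a * Na - b * Nb) * Db" "b * Nb * (Db - Da)"]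
      by (simp add: norm_mult)
    also have "\<dots> \<le> ((M + R*L) * norm (a - b)) * M + R * M * (L * norm (a - b))"
    proof (intro add_mono mult_mono n1 Db(1) b Nb)
      show "norm (Db - Da) \<le> L * norm (a - b)" using D by (simp add: norm_minus_commute)
    qed (auto simp: R M L)
    finally show ?thesis by (simp add: algebra_simps)
  qed
  have n3: "norm (Da * Db) \<ge> \<eta>^2"
    using Da(2) Db(2) \<eta> by (simp add: norm_mult power2_eq_square mult_mono)
  have "norm (a * Na / Da - b * Nb / Db)
      = norm ((a * Na - b * Nb) * Db + b * Nb * (Db - Da)) / norm (Da * Db)"
    unfolding eq by (simp add: norm_divide)
  also have "\<dots> \<le> (((M + R*L)*M + R*M*L) * norm (a - b)) / \<eta>^2"
    by (rule frac_le) (use n2 n3 \<eta> R M L in auto)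
  finally show ?thesis by simp
qed

theorem mainTheorem3:
  fixes \<nu> :: "('a::polish_space) measure"
    and \<Phi> :: "'a potential set" and U :: "complex set" and \<Lambda> :: "'a set" and z :: 'a
  assumes \<nu>: "locally_finite_borel \<nu>"
    and \<Phi>: "\<forall>\<phi>\<in>\<Phi>. is_potential \<phi> \<and> repulsive \<phi>"
    and U: "bounded U"
    and \<Lambda>: "bounded \<Lambda>" "\<Lambda> \<in> sets borel"
  shows "unif_equicontinuous_on U ((\<lambda>\<phi> w. partition_fn \<nu> \<Lambda> \<phi> w) ` \<Phi>)
    \<and> (\<forall>w0 \<delta>. closed_under_modification z \<Phi> \<and> \<delta> > 0 \<and> zero_free \<nu> \<Phi> \<Lambda> w0 \<delta> \<longrightarrow>
         (\<exists>W. open W \<and> w0 \<in> W \<and>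
            (\<forall>\<phi>\<in>\<Phi>. \<forall>w\<in>W. partition_fn \<nu> \<Lambda> \<phi> w \<noteq> 0) \<and>
            unif_equicontinuous_on W
              {(\<lambda>w. kappa \<nu> \<Lambda> \<phi> w [x]) | \<phi> x. \<phi> \<in> \<Phi> \<and> x \<in> \<Lambda>}))"
proof
  define m where "m = measure \<nu> \<Lambda>"
  have m: "m \<ge> 0" unfolding m_def by simp
  have rep: "\<And>\<phi>. \<phi> \<in> \<Phi> \<Longrightarrow> repulsive \<phi>" using \<Phi> by auto
  obtain R where R: "\<And>a. a \<in> U \<Longrightarrow> norm a \<le> R" using U unfolding bounded_iff by blast
  show "unif_equicontinuous_on U ((\<lambda>\<phi> w. partition_fn \<nu> \<Lambda> \<phi> w) ` \<Phi>)"
  proof (rule lip_equi[of "exp (2*(R+1)*m)"])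
    fix f a b assume f: "f \<in> (\<lambda>\<phi> w. partition_fn \<nu> \<Lambda> \<phi> w) ` \<Phi>" and a: "a \<in> U" and b: "b \<in> U"
    then obtain \<phi> where \<phi>: "\<phi> \<in> \<Phi>" and f: "f = partition_fn \<nu> \<Lambda> \<phi>" by auto
    show "dist (f a) (f b) \<le> exp (2*(R+1)*m) * dist a b"
      using Z_lip[OF \<nu> \<Lambda> rep[OF \<phi>] R[OF a] R[OF b]] unfolding f m_def dist_norm
      by (simp add: mult.commute)
  qed simp
  show "\<forall>w0 \<delta>. closed_under_modification z \<Phi> \<and> \<delta> > 0 \<and> zero_free \<nu> \<Phi> \<Lambda> w0 \<delta> \<longrightarrow>
         (\<exists>W. open W \<and> w0 \<in> W \<and>
            (\<forall>\<phi>\<in>\<Phi>. \<forall>w\<in>W. partition_fn \<nu> \<Lambda> \<phi> w \<noteq> 0) \<and>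
            unif_equicontinuous_on W
              {(\<lambda>w. kappa \<nu> \<Lambda> \<phi> w [x]) | \<phi> x. \<phi> \<in> \<Phi> \<and> x \<in> \<Lambda>})"
  proof (intro allI impI)
    fix w0 :: complex and \<delta> :: real
    assume H: "closed_under_modification z \<Phi> \<and> \<delta> > 0 \<and> zero_free \<nu> \<Phi> \<Lambda> w0 \<delta>"
    hence \<delta>: "\<delta> > 0" and zf: "\<And>\<phi>. \<phi> \<in> \<Phi> \<Longrightarrow> norm (partition_fn \<nu> \<Lambda> \<phi> w0) \<ge> \<delta>"
      by (auto simp: zero_free_def)
    define R0 where "R0 = norm w0 + 1"
    define L where "L = exp (2*(R0+1)*m)"
    define M where "M = exp (m * R0)"
    define r where "r = min 1 (\<delta> / (2*(L+1)))"
    have L: "L \<ge> 0" and M: "M \<ge> 0" unfolding L_def M_def by auto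
    have r: "r > 0" unfolding r_def using \<delta> L by auto
    define W where "W = ball w0 r"
    have inW: "norm w \<le> R0" if "w \<in> W" for w
    proof -
      have "dist w0 w < 1" using that r_def unfolding W_def by auto
      hence "norm (w - w0) \<le> 1" by (simp add: dist_norm norm_minus_commute)
      thus ?thesis unfolding R0_def using norm_triangle_ineq[of "w - w0" w0] by simp
    qed
    have w0R: "norm w0 \<le> R0" unfolding R0_def by simp
    have low: "norm (partition_fn \<nu> \<Lambda> \<phi> w) \<ge> \<delta>/2" if \<phi>: "\<phi> \<in> \<Phi>" and w: "w \<in> W" for \<phi> w
    proof -
      have "norm (partition_fn \<nu> \<Lambda> \<phi> w - partition_fn \<nu> \<Lambda> \<phi> w0) \<le> norm (w - w0) * L"
        using Z_lip[OF \<nu> \<Lambda> rep[OF \<phi>] inW[OF w] w0R] unfolding L_def m_def .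
      also have "\<dots> \<le> (\<delta> / (2*(L+1))) * L"
      proof (rule mult_right_mono[OF _ L])
        have "norm (w - w0) < r" using w unfolding W_def by (simp add: dist_norm norm_minus_commute)
        thus "norm (w - w0) \<le> \<delta> / (2*(L+1))" unfolding r_def by simp
      qed
      also have "\<dots> \<le> \<delta>/2" using \<delta> L by (simp add: field_simps)
      finally have "norm (partition_fn \<nu> \<Lambda> \<phi> w - partition_fn \<nu> \<Lambda> \<phi> w0) \<le> \<delta>/2" .
      moreover have "norm (partition_fn \<nu> \<Lambda> \<phi> w0) \<le> norm (partition_fn \<nu> \<Lambda> \<phi> w)
          + norm (partition_fn \<nu> \<Lambda> \<phi> w - partition_fn \<nu> \<Lambda> \<phi> w0)"
        using norm_triangle_ineq2[of "partition_fn \<nu> \<Lambda> \<phi> w0" "partition_fn \<nu> \<Lambda> \<phi> w"]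
        by (simp add: norm_minus_commute)
      ultimately show ?thesis using zf[OF \<phi>] by simp
    qed
    show "\<exists>W. open W \<and> w0 \<in> W \<and>
            (\<forall>\<phi>\<in>\<Phi>. \<forall>w\<in>W. partition_fn \<nu> \<Lambda> \<phi> w \<noteq> 0) \<and>
            unif_equicontinuous_on W
              {(\<lambda>w. kappa \<nu> \<Lambda> \<phi> w [x]) | \<phi> x. \<phi> \<in> \<Phi> \<and> x \<in> \<Lambda>}"
    proof (intro exI[of _ W] conjI ballI)
      show "open W" unfolding W_def by simp
      show "w0 \<in> W" unfolding W_def using r by simp
      fix \<phi> w assume "\<phi> \<in> \<Phi>" "w \<in> W"
      thus "partition_fn \<nu> \<Lambda> \<phi> w \<noteq> 0" using low[of \<phi> w] \<delta> by auto
    next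
      show "unif_equicontinuous_on W {(\<lambda>w. kappa \<nu> \<Lambda> \<phi> w [x]) | \<phi> x. \<phi> \<in> \<Phi> \<and> x \<in> \<Lambda>}"
      proof (rule lip_equi[of "((M + R0*L)*M + R0*M*L) / (\<delta>/2)^2"])
        show "((M + R0*L)*M + R0*M*L) / (\<delta>/2)^2 \<ge> 0" using L M R0_def by simp
        fix f a b assume f: "f \<in> {(\<lambda>w. kappa \<nu> \<Lambda> \<phi> w [x]) | \<phi> x. \<phi> \<in> \<Phi> \<and> x \<in> \<Lambda>}"
          and a: "a \<in> W" and b: "b \<in> W"
        then obtain \<phi> x where \<phi>: "\<phi> \<in> \<Phi>" and f: "f = (\<lambda>w. kappa \<nu> \<Lambda> \<phi> w [x])" by auto
        have rp: "repulsive (pin \<phi> [x])" by (rule pin_repulsive[OF rep[OF \<phi>]])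
        have fe: "f w = w * partition_fn \<nu> \<Lambda> (pin \<phi> [x]) w / partition_fn \<nu> \<Lambda> \<phi> w" for w
          unfolding f kappa_def by simp
        show "dist (f a) (f b) \<le> ((M + R0*L)*M + R0*M*L) / (\<delta>/2)^2 * dist a b"
          unfolding dist_norm fe
        proof (rule quot_lip[OF inW[OF a] inW[OF b]])
          show "norm (partition_fn \<nu> \<Lambda> (pin \<phi> [x]) a) \<le> M"
            using Z_bound[OF \<nu> \<Lambda> rp inW[OF a]] unfolding M_def m_def .
          show "norm (partition_fn \<nu> \<Lambda> (pin \<phi> [x]) b) \<le> M"
            using Z_bound[OF \<nu> \<Lambda> rp inW[OF b]] unfolding M_def m_def .
          show "norm (partition_fn \<nu> \<Lambda> \<phi> a) \<le> M"
            using Z_bound[OF \<nu> \<Lambda> rep[OF \<phi>] inW[OF a]] unfolding M_def m_def .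
          show "norm (partition_fn \<nu> \<Lambda> \<phi> b) \<le> M"
            using Z_bound[OF \<nu> \<Lambda> rep[OF \<phi>] inW[OF b]] unfolding M_def m_def .
          show "norm (partition_fn \<nu> \<Lambda> \<phi> a) \<ge> \<delta>/2" by (rule low[OF \<phi> a])
          show "norm (partition_fn \<nu> \<Lambda> \<phi> b) \<ge> \<delta>/2" by (rule low[OF \<phi> b])
          show "\<delta>/2 > 0" using \<delta> by simp
          show "norm (partition_fn \<nu> \<Lambda> (pin \<phi> [x]) a - partition_fn \<nu> \<Lambda> (pin \<phi> [x]) b) \<le> L * norm (a - b)"
            using Z_lip[OF \<nu> \<Lambda> rp inW[OF a] inW[OF b]] unfolding L_def m_def by (simp add: mult.commute)
          show "norm (partition_fn \<nu> \<Lambda> \<phi> a - partition_fn \<nu> \<Lambda> \<phi> b) \<le> L * norm (a - b)"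
            using Z_lip[OF \<nu> \<Lambda> rep[OF \<phi>] inW[OF a] inW[OF b]] unfolding L_def m_def by (simp add: mult.commute)
        qed (use L M in auto)
      qed
    qed
  qed
qed

end
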